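(* Let $F_3=|0\rangle\langle0|\otimes I_2\otimes I_2+|1\rangle\langle1|\otimes\mathrm{SWAP}$ be the Fredkin gate and $U_5=(T_{AB}\otimes I_2)F_3=|0\rangle\langle0|\otimes I_2\otimes I_2+|1\rangle\langle1|\otimes(\sigma_1\otimes I_2)\,\mathrm{SWAP}$. Then $\mathrm{sr}(U_5)=5$.
   Context: $I_2$ is the $2\times 2$ identity, $\sigma_1=\begin{bmatrix}0&1\\1&0\end{bmatrix}$, $\{|0\rangle,|1\rangle\}$ is the standard basis of $\mathbb{C}^2$, and $\mathrm{SWAP}|b,c\rangle=|c,b\rangle$ on $\mathbb{C}^2\otimes\mathbb{C}^2$. $T=|0\rangle\langle0|\otimes I_2+|1\rangle\langle1|\otimes\sigma_1$ is the CNOT gate; $T_{AB}$ denotes $T$ with control qubit $A$ and target $B$. For a matrix $U$ on $\mathbb{C}^2\otimes\mathbb{C}^2\otimes\mathbb{C}^2$ (systems $A,B,C$), its Schmidt rank $\mathrm{sr}(U)$ is the least integer $r$ such that $U=\sum_{j=1}^r A_j\otimes B_j\otimes C_j$ with $A_j,B_j,C_j$ complex $2\times 2$ matrices (i.e. the tensor rank of $U$). *)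

theory Defs
  imports Complex_Main
begin

text \<open>Qubit basis index: False = |0>, True = |1>.
  A 2x2 matrix is a function bool => bool => complex (row index, column index);
  a matrix on C^2 (x) C^2 is indexed by bool*bool, on C^2 (x) C^2 (x) C^2 by bool*bool*bool
  (systems A,B,C in this order).\<close>

type_synonym mat1 = "bool \<Rightarrow> bool \<Rightarrow> complex"
type_synonym mat2 = "bool \<times> bool \<Rightarrow> bool \<times> bool \<Rightarrow> complex"
type_synonym mat3 = "bool \<times> bool \<times> bool \<Rightarrow> bool \<times> bool \<times> bool \<Rightarrow> complex"

definition I2 :: mat1 where "I2 a b = (if a = b then 1 else 0)"
definition sigma1 :: mat1 where "sigma1 a b = (if a \<noteq> b then 1 else 0)"
definition P0 :: mat1 where "P0 a b = (if \<not> a \<and> \<not> b then 1 else 0)"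
definition P1 :: mat1 where "P1 a b = (if a \<and> b then 1 else 0)"

definition kron11 :: "mat1 \<Rightarrow> mat1 \<Rightarrow> mat2" where
  "kron11 A B = (\<lambda>(a,b) (a',b'). A a a' * B b b')"

definition kron12 :: "mat1 \<Rightarrow> mat2 \<Rightarrow> mat3" where
  "kron12 A M = (\<lambda>(a,b,c) (a',b',c'). A a a' * M (b,c) (b',c'))"

definition kron21 :: "mat2 \<Rightarrow> mat1 \<Rightarrow> mat3" where
  "kron21 M C = (\<lambda>(a,b,c) (a',b',c'). M (a,b) (a',b') * C c c')"

definition kron111 :: "mat1 \<Rightarrow> mat1 \<Rightarrow> mat1 \<Rightarrow> mat3" where
  "kron111 A B C = (\<lambda>(a,b,c) (a',b',c'). A a a' * B b b' * C c c')"

definition mult2 :: "mat2 \<Rightarrow> mat2 \<Rightarrow> mat2" where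
  "mult2 U V = (\<lambda>x z. \<Sum>y\<in>UNIV. U x y * V y z)"

definition mult3 :: "mat3 \<Rightarrow> mat3 \<Rightarrow> mat3" where
  "mult3 U V = (\<lambda>x z. \<Sum>y\<in>UNIV. U x y * V y z)"

definition SWAP :: mat2 where
  "SWAP = (\<lambda>(b,c) (b',c'). if b = c' \<and> c = b' then 1 else 0)"

definition CNOT :: mat2 where
  "CNOT = (\<lambda>x y. kron11 P0 I2 x y + kron11 P1 sigma1 x y)"

definition Fredkin :: mat3 where
  "Fredkin = (\<lambda>x y. kron12 P0 (kron11 I2 I2) x y + kron12 P1 SWAP x y)"

definition U5 :: mat3 where
  "U5 = mult3 (kron21 CNOT I2) Fredkin"

definition schmidt_rank :: "mat3 \<Rightarrow> nat" where
  "schmidt_rank U = (LEAST r. \<exists>A B C :: nat \<Rightarrow> mat1.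
      U = (\<lambda>x y. \<Sum>j<r. kron111 (A j) (B j) (C j) x y))"

end

theory Submission
  imports Defs "HOL-Analysis.Analysis"
begin

lemma UNIV_bb: "(UNIV :: (bool\<times>bool) set) = {(False,False),(False,True),(True,False),(True,True)}"
  by (auto simp: UNIV_bool)
lemma UNIV_bbb: "(UNIV :: (bool\<times>bool\<times>bool) set) = {(False,False,False),(False,False,True),(False,True,False),(False,True,True),(True,False,False),(True,False,True),(True,True,False),(True,True,True)}"
  by auto
lemma sum_bb: "(\<Sum>x\<in>(UNIV :: (bool\<times>bool) set). f x) = f (False,False) + f (False,True) + f (True,False) + f (True,True)"
  by (simp add: UNIV_bb add_ac)
lemma sum_bbb: "(\<Sum>x\<in>(UNIV :: (bool\<times>bool\<times>bool) set). f x) = f (False,False,False) + f (False,False,True) + f (False,True,False) + f (False,True,True) + f (True,False,False) + f (True,False,True) + f (True,True,False) + f (True,True,True)"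
  by (simp add: UNIV_bbb add_ac)

lemma U5_eq: "U5 (a,b,c) (a',b',c') = (if a = a' then (if a then (if b = (\<not> c') \<and> c = b' then 1 else 0) else (if b = b' \<and> c = c' then 1 else 0)) else 0)"
  by (cases a; cases b; cases c; cases a'; cases b'; cases c';
      simp add: U5_def mult3_def sum_bbb kron21_def CNOT_def kron11_def Fredkin_def kron12_def P0_def P1_def I2_def sigma1_def SWAP_def)

definition Mm :: "complex \<Rightarrow> complex^(bool\<times>bool)^(bool\<times>bool)" where
 "Mm l = (\<chi> r s. (if snd r = fst s \<and> snd s = (\<not> fst r) then 1 else 0) - l * (if fst r = snd r \<and> fst s = snd s then 1 else 0))"
definition Zm :: "complex \<Rightarrow> complex^(bool\<times>bool)^(bool\<times>bool)" where
 "Zm l = (\<chi> s r. (if snd r = fst s \<and> snd s = (\<not> fst r) then 1 else 0) + l * (if fst s \<noteq> snd s \<and> fst r \<noteq> snd r then 1 else 0))"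

lemma MZ: "Mm l ** Zm l = mat 1"
  unfolding Mm_def Zm_def matrix_matrix_mult_def mat_def
  by (simp add: vec_eq_iff sum_bb)

lemma det_Mm: "det (Mm l) \<noteq> 0"
  by (metis MZ det_I det_mul mult_zero_left one_neq_zero)

definition idx :: "bool\<times>bool \<Rightarrow> nat" where
  "idx k = (if fst k then 2 else 0) + (if snd k then 1 else 0)"

lemma sum4: "(\<Sum>j<(4::nat). f j) = f 0 + f 1 + f 2 + (f 3 :: 'a::comm_monoid_add)"
proof -
  have "{..<(4::nat)} = {0,1,2,3}" by auto
  then show ?thesis by (simp add: add_ac)
qed

lemma key:
  fixes d :: "nat \<Rightarrow> complex" and B C :: "nat \<Rightarrow> mat1"
  assumes h: "\<And>b b' c c'. Mm l $ (b,b') $ (c,c') = (\<Sum>j<4. d j * B j b b' * C j c c')"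
    and j0: "j0 < 4" "d j0 = 0"
  shows False
proof -
  define Bm :: "complex^(bool\<times>bool)^(bool\<times>bool)" where "Bm = (\<chi> r k. B (idx k) (fst r) (snd r))"
  define Cm :: "complex^(bool\<times>bool)^(bool\<times>bool)" where "Cm = (\<chi> k s. d (idx k) * C (idx k) (fst s) (snd s))"
  have "Mm l = Bm ** Cm"
    unfolding vec_eq_iff
  proof (intro allI)
    fix r s :: "bool\<times>bool"
    obtain b b' c c' where rs: "r = (b,b')" "s = (c,c')" by fastforce
    show "Mm l $ r $ s = (Bm ** Cm) $ r $ s"
      unfolding rs h by (simp add: Bm_def Cm_def matrix_matrix_mult_def sum_bb sum4 idx_def algebra_simps eval_nat_numeral)
  qed
  moreover obtain k0 where k0: "idx k0 = j0"
  proof -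
    have "j0 = 0 \<or> j0 = 1 \<or> j0 = 2 \<or> j0 = 3" using j0(1) by auto
    then show ?thesis using that[of "(False,False)"] that[of "(False,True)"] that[of "(True,False)"] that[of "(True,True)"]
      by (auto simp: idx_def)
  qed
  then have "row k0 Cm = 0" by (simp add: row_def Cm_def vec_eq_iff j0(2))
  then have "det Cm = 0" by (rule det_zero_row)
  ultimately have "det (Mm l) = 0" by (simp add: det_mul)
  with det_Mm show False by simp
qed

definition E :: "bool \<Rightarrow> bool \<Rightarrow> mat1" where "E p q = (\<lambda>a b. if a = p \<and> b = q then 1 else 0)"

lemma sum5: "(\<Sum>j<(5::nat). f j) = f 0 + f 1 + f 2 + f 3 + (f 4 :: 'a::comm_monoid_add)"
proof -
  have "{..<(5::nat)} = {0,1,2,3,4}" by auto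
  then show ?thesis by (simp add: add_ac)
qed

lemma upper: "U5 = (\<lambda>x y. \<Sum>j<(5::nat). kron111 ((\<lambda>j. if j = 0 then P0 else P1) j)
      ((\<lambda>j. if j = 0 then I2 else E (\<not> (j = 2 \<or> j = 4)) (3 \<le> j)) j)
      ((\<lambda>j. if j = 0 then I2 else E (3 \<le> j) (j = 2 \<or> j = 4)) j) x y)" (is "_ = ?R")
proof (intro ext)
  fix x y :: "bool\<times>bool\<times>bool"
  obtain a b c a' b' c' where xy: "x = (a,b,c)" "y = (a',b',c')" by (cases x; cases y; auto)
  show "U5 x y = ?R x y"
    unfolding xy U5_eq sum5
    by (cases a; cases b; cases c; cases a'; cases b'; cases c';
        simp add: kron111_def P0_def P1_def I2_def E_def)
qed

lemma lower:
  fixes r :: nat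
  assumes "r < 5" and hU: "U5 = (\<lambda>x y. \<Sum>j<r. kron111 (A j) (B j) (C j) x y)"
  shows False
proof -
  define A' :: "nat \<Rightarrow> mat1" where "A' j = (if j < r then A j else (\<lambda>_ _. 0))" for j
  have U4: "U5 x y = (\<Sum>j<4. kron111 (A' j) (B j) (C j) x y)" for x y
  proof -
    have "(\<Sum>j<4. kron111 (A' j) (B j) (C j) x y) = (\<Sum>j<4. if j \<in> {..<r} then kron111 (A j) (B j) (C j) x y else 0)"
      by (intro sum.cong) (auto simp: A'_def kron111_def split: prod.splits)
    also have "\<dots> = (\<Sum>j\<in>{..<4} \<inter> {..<r}. kron111 (A j) (B j) (C j) x y)"
      by (simp add: sum.inter_restrict)
    also have "{..<4} \<inter> {..<r} = {..<r}" using assms(1) by auto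
    finally show ?thesis by (simp add: hU)
  qed
  have Y: "(if b = (\<not> c') \<and> c = b' then 1 else 0) = (\<Sum>j<4. A' j True True * B j b b' * C j c c')" for b c b' c'
    using U4[of "(True,b,c)" "(True,b',c')"] by (simp add: U5_eq kron111_def)
  have X: "(if b = b' \<and> c = c' then 1 else 0) = (\<Sum>j<4. A' j False False * B j b b' * C j c c')" for b c b' c'
    using U4[of "(False,b,c)" "(False,b',c')"] by (simp add: U5_eq kron111_def)
  obtain j0 where j0: "j0 < 4" "A' j0 False False \<noteq> 0"
  proof (rule ccontr)
    assume "\<not> thesis"
    then have "\<forall>j<4. A' j False False = 0" using that by blast
    then have "(\<Sum>j<4. A' j False False * B j False False * C j False False) = 0" by simp
    with X[of False False False False] show False by simp
  qed
  define l where "l = A' j0 True True / A' j0 False False"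
  define d where "d j = A' j True True - l * A' j False False" for j
  have "d j0 = 0" using j0(2) by (simp add: d_def l_def)
  moreover have "Mm l $ (b,b') $ (c,c') = (\<Sum>j<4. d j * B j b b' * C j c c')" for b b' c c'
  proof -
    have "Mm l $ (b,b') $ (c,c') = (if b = (\<not> c') \<and> c = b' then 1 else 0) - l * (if b = b' \<and> c = c' then 1 else 0)"
      by (auto simp: Mm_def)
    also have "\<dots> = (\<Sum>j<4. A' j True True * B j b b' * C j c c') - l * (\<Sum>j<4. A' j False False * B j b b' * C j c c')"
      using X[where b=b and b'=b' and c=c and c'=c'] Y[where b=b and b'=b' and c=c and c'=c'] by argo
    also have "\<dots> = (\<Sum>j<4. d j * B j b b' * C j c c')"
      by (simp add: d_def sum_distrib_left sum_subtractf[symmetric] algebra_simps)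
    finally show ?thesis .
  qed
  ultimately show False using key j0(1) by blast
qed

theorem mainTheorem15:
  shows "schmidt_rank U5 = 5"
  unfolding schmidt_rank_def
proof (rule Least_equality)
  show "\<exists>A B C :: nat \<Rightarrow> mat1. U5 = (\<lambda>x y. \<Sum>j<5. kron111 (A j) (B j) (C j) x y)"
    by (rule exI, rule exI, rule exI, rule upper)
next
  fix r assume "\<exists>A B C :: nat \<Rightarrow> mat1. U5 = (\<lambda>x y. \<Sum>j<r. kron111 (A j) (B j) (C j) x y)"
  then obtain A B C :: "nat \<Rightarrow> mat1" where "U5 = (\<lambda>x y. \<Sum>j<r. kron111 (A j) (B j) (C j) x y)" by blast
  then show "5 \<le> r" using lower[of r] by (meson not_le)
qed

end
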